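(* For every term $t$ over $\Sigma_{md,\bot}(X)$ there exist terms $r_1,r_2$ over $\Sigma_f(X)$ such that $t=r_1\cdot r_2^{-1}$ is derivable in equational logic from $\mathsf{Md}_\bot$ and $\mathsf{VAR}(t)=\mathsf{VAR}(r_1)\cup\mathsf{VAR}(r_2)$.
   Context: $\Sigma_f$ is the signature with one sort, constants $0,1$, binary operations $+,\cdot$ and unary operation $-$; $\Sigma_{md,\bot}$ extends it with a constant $\bot$ and a unary operation $(\,\cdot\,)^{-1}$. For a signature $\Sigma$, $\Sigma(X)$ denotes terms over $\Sigma$ with variables from the set $X$, and $\mathsf{VAR}(t)$ is the set of variables occurring in $t$. $\mathsf{Md}_\bot$ is the set of equations (variables universally quantified): $(x+y)+z=x+(y+z)$; $x+y=y+x$; $x+0=x$; $x+(-x)=0\cdot x$; $(x\cdot y)\cdot z=x\cdot(y\cdot z)$; $x\cdot y=y\cdot x$; $1\cdot x=x$; $x\cdot(y+z)=x\cdot y+x\cdot z$; $-(-x)=x$; $0\cdot(x\cdot x)=0\cdot x$; $(x^{-1})^{-1}=x+0\cdot x^{-1}$; $x\cdot x^{-1}=1+0\cdot x^{-1}$; $(x\cdot y)^{-1}=x^{-1}\cdot y^{-1}$; $1^{-1}=1$; $0^{-1}=\bot$; $x+\bot=\bot$; $x\cdot\bot=\bot$. *)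

theory Defs
  imports Main
begin

datatype 'x trm =
    Var 'x
  | Zero
  | One
  | Plus "'x trm" "'x trm"
  | Times "'x trm" "'x trm"
  | Neg "'x trm"
  | Bot
  | Inv "'x trm"

fun is_field_term :: "'x trm \<Rightarrow> bool" where
  "is_field_term (Var x) = True"
| "is_field_term Zero = True"
| "is_field_term One = True"
| "is_field_term (Plus a b) = (is_field_term a \<and> is_field_term b)"
| "is_field_term (Times a b) = (is_field_term a \<and> is_field_term b)"
| "is_field_term (Neg a) = is_field_term a"
| "is_field_term Bot = False"
| "is_field_term (Inv a) = False"

fun vars :: "'x trm \<Rightarrow> 'x set" where
  "vars (Var x) = {x}"
| "vars Zero = {}"
| "vars One = {}"
| "vars (Plus a b) = vars a \<union> vars b"
| "vars (Times a b) = vars a \<union> vars b"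
| "vars (Neg a) = vars a"
| "vars Bot = {}"
| "vars (Inv a) = vars a"

text \<open>Substitution instances of the equations of Md_bot (the axiom schemes are
  stated for arbitrary terms x y z, which is the same as closing under substitution).\<close>
inductive md_axiom :: "'x trm \<Rightarrow> 'x trm \<Rightarrow> bool" where
  "md_axiom (Plus (Plus x y) z) (Plus x (Plus y z))"
| "md_axiom (Plus x y) (Plus y x)"
| "md_axiom (Plus x Zero) x"
| "md_axiom (Plus x (Neg x)) (Times Zero x)"
| "md_axiom (Times (Times x y) z) (Times x (Times y z))"
| "md_axiom (Times x y) (Times y x)"
| "md_axiom (Times One x) x"
| "md_axiom (Times x (Plus y z)) (Plus (Times x y) (Times x z))"
| "md_axiom (Neg (Neg x)) x"
| "md_axiom (Times Zero (Times x x)) (Times Zero x)"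
| "md_axiom (Inv (Inv x)) (Plus x (Times Zero (Inv x)))"
| "md_axiom (Times x (Inv x)) (Plus One (Times Zero (Inv x)))"
| "md_axiom (Inv (Times x y)) (Times (Inv x) (Inv y))"
| "md_axiom (Inv One) One"
| "md_axiom (Inv Zero) Bot"
| "md_axiom (Plus x Bot) Bot"
| "md_axiom (Times x Bot) Bot"

inductive md_eq :: "'x trm \<Rightarrow> 'x trm \<Rightarrow> bool" where
  ax: "md_axiom s t \<Longrightarrow> md_eq s t"
| refl: "md_eq t t"
| sym: "md_eq s t \<Longrightarrow> md_eq t s"
| trans: "md_eq s t \<Longrightarrow> md_eq t u \<Longrightarrow> md_eq s u"
| cong_plus: "md_eq s1 t1 \<Longrightarrow> md_eq s2 t2 \<Longrightarrow> md_eq (Plus s1 s2) (Plus t1 t2)"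
| cong_times: "md_eq s1 t1 \<Longrightarrow> md_eq s2 t2 \<Longrightarrow> md_eq (Times s1 s2) (Times t1 t2)"
| cong_neg: "md_eq s t \<Longrightarrow> md_eq (Neg s) (Neg t)"
| cong_inv: "md_eq s t \<Longrightarrow> md_eq (Inv s) (Inv t)"

end

theory Submission
  imports Defs
begin

lemma md_equivp: "equivp md_eq"
  by (rule equivpI; auto simp: reflp_def symp_def transp_def intro: md_eq.intros)

quotient_type 'x q = "'x trm" / md_eq
  by (rule md_equivp)

instantiation q :: (type) "{comm_monoid_add, comm_monoid_mult, uminus}"
begin
lift_definition zero_q :: "'a q" is Zero .
lift_definition one_q :: "'a q" is One .
lift_definition plus_q :: "'a q \<Rightarrow> 'a q \<Rightarrow> 'a q" is Plus by (rule md_eq.cong_plus)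
lift_definition times_q :: "'a q \<Rightarrow> 'a q \<Rightarrow> 'a q" is Times by (rule md_eq.cong_times)
lift_definition uminus_q :: "'a q \<Rightarrow> 'a q" is Neg by (rule md_eq.cong_neg)
instance
proof
  fix a b c :: "'a q"
  show "a + b + c = a + (b + c)"
    by transfer (auto intro: md_eq.ax md_axiom.intros)
  show "a + b = b + a"
    by transfer (auto intro: md_eq.ax md_axiom.intros)
  show "0 + a = a"
    by transfer (meson md_eq.ax md_eq.trans md_axiom.intros)
  show "a * b * c = a * (b * c)"
    by transfer (auto intro: md_eq.ax md_axiom.intros)
  show "a * b = b * a"
    by transfer (auto intro: md_eq.ax md_axiom.intros)
  show "1 * a = a"
    by transfer (auto intro: md_eq.ax md_axiom.intros)
qed
end

lift_definition qinv :: "'a q \<Rightarrow> 'a q" is Inv by (rule md_eq.cong_inv)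
lift_definition qbot :: "'a q" is Bot .

lemma distL: "(x::'a q) * (y + z) = x * y + x * z"
  by transfer (auto intro: md_eq.ax md_axiom.intros)
lemma distR: "((y::'a q) + z) * x = y * x + z * x"
  by (metis distL mult.commute)
lemma A1: "0 * ((x::'a q) * x) = 0 * x"
  by transfer (auto intro: md_eq.ax md_axiom.intros)
lemma A2: "qinv (qinv x) = x + 0 * qinv x"
  by transfer (auto intro: md_eq.ax md_axiom.intros)
lemma A3: "x * qinv x = 1 + 0 * qinv x"
  by transfer (auto intro: md_eq.ax md_axiom.intros)
lemma A4: "qinv (x * y) = qinv x * qinv y"
  by transfer (auto intro: md_eq.ax md_axiom.intros)
lemma A5: "qinv 1 = 1"
  by transfer (auto intro: md_eq.ax md_axiom.intros)
lemma A6: "qinv 0 = qbot"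
  by transfer (auto intro: md_eq.ax md_axiom.intros)
lemma A7: "(x::'a q) * qbot = qbot"
  by transfer (auto intro: md_eq.ax md_axiom.intros)
lemma A8: "(x::'a q) + - x = 0 * x"
  by transfer (auto intro: md_eq.ax md_axiom.intros)
lemma A9: "- (- (x::'a q)) = x"
  by transfer (auto intro: md_eq.ax md_axiom.intros)

lemma D0: "0 * (- 1 :: 'a q) = 0"
proof -
  have "0 * (- 1 :: 'a q) = -1 + - (- 1)" by (rule A8[symmetric])
  also have "\<dots> = 1 + - 1" by (simp add: A9 add.commute)
  also have "\<dots> = 0 * 1" by (rule A8)
  finally show ?thesis by simp
qed

lemma D1: "0 * 0 = (0 :: 'a q)"
proof -
  have "(0::'a q) * 0 = 0 * (1 + - 1)" by (simp add: A8)
  also have "\<dots> = 0" by (simp add: distL D0)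
  finally show ?thesis .
qed

lemma D2: "0 * x + 0 * x = 0 * (x::'a q)"
proof -
  have "0 * x + 0 * x = (0 + 0) * x" by (rule distR[symmetric])
  then show ?thesis by simp
qed

lemma D3: "x + 0 * x = (x::'a q)"
proof -
  have "(1 + 0) * x = 1 * x + 0 * x" by (rule distR)
  then show ?thesis by simp
qed

lemma D4: "0 * (- x) = 0 * (x::'a q)"
proof -
  have "0 * (- x) = - x + - (- x)" by (rule A8[symmetric])
  also have "\<dots> = x + - x" by (simp add: A9 add.commute)
  finally show ?thesis by (simp add: A8)
qed

lemma D5: "(- x) * y = - ((x::'a q) * y)"
proof -
  have e1: "- x + 0 * x = - x" using D3[of "- x"] by (simp add: D4)
  have e2: "(- x) + x = 0 * x" by (subst add.commute) (rule A8)
  have e3: "0 * (x * y) + - (x * y) = - (x * y)"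
    using D3[of "- (x * y)"] by (simp add: D4 add.commute)
  have "(- x) * y = (- x + 0 * x) * y" by (simp add: e1)
  also have "\<dots> = (- x) * y + 0 * (x * y)" by (simp add: distR mult.assoc)
  also have "\<dots> = (- x) * y + (x * y + - (x * y))" by (simp add: A8)
  also have "\<dots> = ((- x) + x) * y + - (x * y)" by (simp add: distR add.assoc)
  also have "\<dots> = 0 * (x * y) + - (x * y)" by (simp add: e2 mult.assoc)
  also have "\<dots> = - (x * y)" by (rule e3)
  finally show ?thesis .
qed

lemma D1b: "0 * (0 * x) = 0 * (x::'a q)"
  by (simp add: mult.assoc[symmetric] D1)

lemma ZZ: "(0 * x) * (0 * y) = 0 * ((x::'a q) * y)"
proof -
  have "(0 * x) * (0 * y) = (0 * 0) * (x * y)" by (simp add: ac_simps)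
  then show ?thesis by (simp add: D1)
qed

lemma absorb: "(0 * x) * (0 * y) = (0 * x) * (0 * y) + 0 * (x::'a q)"
proof -
  define c where "c = 0 * y + 1"
  have c: "0 * c = 0 * y" unfolding c_def by (simp add: distL D1b)
  have "(0 * x) * (0 * y) = (0 * x) * (0 * c)" by (simp add: c)
  also have "\<dots> = 0 * (x * c)" by (rule ZZ)
  also have "\<dots> = (0 * x) * c" by (simp add: mult.assoc)
  also have "\<dots> = (0 * x) * (0 * y) + 0 * x" unfolding c_def by (simp add: distL)
  finally show ?thesis .
qed

lemma D6: "0 * ((x::'a q) * y) = 0 * x + 0 * y"
proof -
  define a where "a = 0 * x"
  define b where "b = 0 * y"
  have ab: "a * b = 0 * (x * y)" unfolding a_def b_def by (rule ZZ)
  have e1: "a * b = a * b + a" unfolding a_def b_def by (rule absorb)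
  have e2: "a * b = a * b + b" unfolding a_def b_def
    using absorb[of y x] by (simp add: mult.commute)
  have "a + b = 0 * (x + y)" by (simp add: a_def b_def distL)
  also have "\<dots> = 0 * ((x + y) * (x + y))" by (simp add: A1)
  also have "\<dots> = 0 * (x * x) + 0 * (y * y) + (0 * (x * y) + 0 * (x * y))"
    by (simp add: distL distR ac_simps)
  also have "\<dots> = a + b + a * b" using ab by (simp add: D2 A1 a_def b_def)
  finally have e3: "a + b = a + b + a * b" .
  have "a + b + a * b = (a * b + a) + b" by (simp add: ac_simps)
  also have "\<dots> = a * b" using e1 e2 by simp
  finally have "a + b = a * b" using e3 by simp
  then show ?thesis using ab a_def b_def by simp
qed

lemma K: "(x::'a q) * y + 0 * y = x * y"
proof -
  have "x * y + 0 * y = (x * y + 0 * (x * y)) + 0 * y" by (simp add: D3)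
  also have "\<dots> = x * y + 0 * x + (0 * y + 0 * y)" by (simp add: D6 ac_simps)
  also have "\<dots> = x * y + 0 * (x * y)" by (simp add: D2 D6 ac_simps)
  also have "\<dots> = x * y" by (rule D3)
  finally show ?thesis .
qed

lemma frac_shift: "(P * S) * qinv (Q * S) = P * qinv Q + 0 * qinv (S::'a q)"
proof -
  have "(P * S) * qinv (Q * S) = (P * qinv Q) * (S * qinv S)" by (simp add: A4 ac_simps)
  also have "\<dots> = P * qinv Q + 0 * ((P * qinv Q) * qinv S)" by (simp add: A3 distL ac_simps)
  also have "\<dots> = (P * qinv Q + 0 * (P * qinv Q)) + 0 * qinv S" by (simp only: D6 add.assoc)
  also have "\<dots> = P * qinv Q + 0 * qinv S" by (simp only: D3)
  finally show ?thesis .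
qed

lemma frac_plus: "P * qinv Q + R * qinv S = (P * S + R * Q) * qinv (Q * (S::'a q))"
proof -
  have "(P * S + R * Q) * qinv (Q * S) = (P * S) * qinv (Q * S) + (R * Q) * qinv (S * Q)"
    by (simp only: distR mult.commute[of S Q])
  also have "\<dots> = (P * qinv Q + 0 * qinv S) + (R * qinv S + 0 * qinv Q)"
    by (simp only: frac_shift)
  also have "\<dots> = (P * qinv Q + 0 * qinv Q) + (R * qinv S + 0 * qinv S)"
    by (simp only: ac_simps)
  also have "\<dots> = P * qinv Q + R * qinv S" by (simp only: K)
  finally show ?thesis by simp
qed

lemma frac_times: "(P * qinv Q) * (R * qinv S) = (P * R) * qinv (Q * (S::'a q))"
  by (simp add: A4 ac_simps)

lemma frac_inv: "qinv (P * qinv Q) = (Q * Q) * qinv (P * (Q::'a q))"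
proof -
  have "qinv (P * qinv Q) = qinv P * Q + 0 * (qinv P * qinv Q)"
    by (simp add: A4 A2 distL ac_simps)
  also have "\<dots> = (qinv P * Q + 0 * Q) + 0 * qinv P + 0 * qinv Q"
    by (simp only: K D6 add.assoc)
  also have "\<dots> = (Q * qinv P) * (Q * qinv Q)"
    by (simp add: A3 distL D6 D1 ac_simps)
  also have "\<dots> = (Q * Q) * qinv (P * Q)" by (simp add: A4 ac_simps)
  finally show ?thesis .
qed

lemma abs_eqI: "abs_q s = abs_q t \<Longrightarrow> md_eq s t"
  by (simp add: q.abs_eq_iff)

lemma absT: "abs_q (Times a b) = abs_q a * abs_q b"
  by (simp add: times_q.abs_eq)
lemma absP: "abs_q (Plus a b) = abs_q a + abs_q b"
  by (simp add: plus_q.abs_eq)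
lemma absN: "abs_q (Neg a) = - abs_q a"
  by (simp add: uminus_q.abs_eq)
lemma absI: "abs_q (Inv a) = qinv (abs_q a)"
  by (simp add: qinv.abs_eq)
lemma abs0: "abs_q Zero = 0" by (simp add: zero_q_def)
lemma abs1: "abs_q One = 1" by (simp add: one_q_def)
lemma absB: "abs_q Bot = qbot" by (simp add: qbot_def)

theorem proposition2p3:
  fixes t :: "'x trm"
  shows "\<exists>r1 r2. is_field_term r1 \<and> is_field_term r2 \<and>
           md_eq t (Times r1 (Inv r2)) \<and> vars t = vars r1 \<union> vars r2"
proof (induction t)
  case (Var x)
  show ?case
    by (rule exI[of _ "Var x"], rule exI[of _ One])
       (auto intro!: abs_eqI simp: absT absI abs1 A5)
next
  case Zero
  show ?case
    by (rule exI[of _ Zero], rule exI[of _ One])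
       (auto intro!: abs_eqI simp: absT absI abs1 abs0 A5)
next
  case One
  show ?case
    by (rule exI[of _ One], rule exI[of _ One])
       (auto intro!: abs_eqI simp: absT absI abs1 A5)
next
  case Bot
  show ?case
    by (rule exI[of _ One], rule exI[of _ Zero])
       (auto intro!: abs_eqI simp: absT absI abs1 abs0 absB A6 A7)
next
  case (Plus a b)
  from Plus.IH(1) obtain p q where pq: "is_field_term p" "is_field_term q"
    "md_eq a (Times p (Inv q))" "vars a = vars p \<union> vars q" by blast
  from Plus.IH(2) obtain r s where rs: "is_field_term r" "is_field_term s"
    "md_eq b (Times r (Inv s))" "vars b = vars r \<union> vars s" by blast
  have ea: "abs_q a = abs_q p * qinv (abs_q q)" using pq(3) unfolding absT[symmetric] absI[symmetric] q.abs_eq_iff by simp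
  have eb: "abs_q b = abs_q r * qinv (abs_q s)" using rs(3) unfolding absT[symmetric] absI[symmetric] q.abs_eq_iff by simp
  show ?case
    apply (rule exI[of _ "Plus (Times p s) (Times r q)"], rule exI[of _ "Times q s"])
    using pq rs by (auto intro!: abs_eqI simp: absT absI absP ea eb frac_plus)
next
  case (Times a b)
  from Times.IH(1) obtain p q where pq: "is_field_term p" "is_field_term q"
    "md_eq a (Times p (Inv q))" "vars a = vars p \<union> vars q" by blast
  from Times.IH(2) obtain r s where rs: "is_field_term r" "is_field_term s"
    "md_eq b (Times r (Inv s))" "vars b = vars r \<union> vars s" by blast
  have ea: "abs_q a = abs_q p * qinv (abs_q q)" using pq(3) unfolding absT[symmetric] absI[symmetric] q.abs_eq_iff by simp
  have eb: "abs_q b = abs_q r * qinv (abs_q s)" using rs(3) unfolding absT[symmetric] absI[symmetric] q.abs_eq_iff by simp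
  show ?case
    apply (rule exI[of _ "Times p r"], rule exI[of _ "Times q s"])
    using pq rs by (auto intro!: abs_eqI simp: absT absI ea eb frac_times)
next
  case (Neg a)
  from Neg.IH obtain p q where pq: "is_field_term p" "is_field_term q"
    "md_eq a (Times p (Inv q))" "vars a = vars p \<union> vars q" by blast
  have ea: "abs_q a = abs_q p * qinv (abs_q q)" using pq(3) unfolding absT[symmetric] absI[symmetric] q.abs_eq_iff by simp
  show ?case
    apply (rule exI[of _ "Neg p"], rule exI[of _ q])
    using pq by (auto intro!: abs_eqI simp: absT absI absN ea D5)
next
  case (Inv a)
  from Inv.IH obtain p q where pq: "is_field_term p" "is_field_term q"
    "md_eq a (Times p (Inv q))" "vars a = vars p \<union> vars q" by blast
  have ea: "abs_q a = abs_q p * qinv (abs_q q)" using pq(3) unfolding absT[symmetric] absI[symmetric] q.abs_eq_iff by simp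
  show ?case
    apply (rule exI[of _ "Times q q"], rule exI[of _ "Times p q"])
    using pq by (auto intro!: abs_eqI simp: absT absI ea frac_inv)
qed

end
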